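(* Let $K\subset L$ be a finite separable extension of commutative fields. Let $B$ be a $K$-subspace of $L$ containing $1$. Then the smallest integer $n\geq1$ such that $\langle B^n\rangle$ is a field satisfies $n\leq 2\dim_KL/\dim_KB$.
   Context: For $S\subset L$, $\langle S\rangle$ denotes the $K$-subspace of $L$ spanned by $S$. $B^m=\{b_1\cdots b_m\mid b_i\in B\}$ is the $m$-fold product set. *)

theory Defs
  imports "HOL-Algebra.Algebra"
begin

text \<open>Formal derivative of a polynomial in the HOL-Algebra list representation
  (coefficients listed from the leading one down to the constant term).\<close>
definition (in ring) pderiv_list :: "'a list \<Rightarrow> 'a list" where
  "pderiv_list p =
     normalize (map (\<lambda>i. add_pow R (length p - 1 - i) (p ! i)) [0..< length p - 1])"

definition (in ring) separable_poly :: "'a set \<Rightarrow> 'a list \<Rightarrow> bool" where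
  "separable_poly K p \<longleftrightarrow>
     (\<forall>d \<in> carrier (K[X]). d divides\<^bsub>K[X]\<^esub> p \<and> d divides\<^bsub>K[X]\<^esub> pderiv_list p
        \<longrightarrow> d \<in> Units (K[X]))"

definition (in ring) separable_elem :: "'a set \<Rightarrow> 'a \<Rightarrow> bool" where
  "separable_elem K x \<longleftrightarrow> algebraic K x \<and> separable_poly K (Irr K x)"

definition (in ring) separable_ext :: "'a set \<Rightarrow> bool" where
  "separable_ext K \<longleftrightarrow> (\<forall>x \<in> carrier R. separable_elem K x)"

fun (in ring) prod_set :: "'a set \<Rightarrow> nat \<Rightarrow> 'a set" where
  "prod_set B 0 = {\<one>}"
| "prod_set B (Suc m) = {b \<otimes> c | b c. b \<in> B \<and> c \<in> prod_set B m}"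

definition (in ring) span_set :: "'a set \<Rightarrow> 'a set \<Rightarrow> 'a set" where
  "span_set K S = (\<Union> {Span K Us | Us. set Us \<subseteq> S})"

end

theory Submission
  imports Defs
begin


locale fext = field R for R (structure) +
  fixes K assumes K: "subfield K R" and fd: "finite_dimension K (carrier R)"
begin

abbreviation isV where "isV V \<equiv> subalgebra K V R"
abbreviation dm where "dm V \<equiv> dim K V"

lemma Ksub: "K \<subseteq> carrier R" using subfieldE(3)[OF K] .
lemma Kone: "\<one> \<in> K" using subringE(3)[OF subfieldE(1)[OF K]] .

lemma dmI: "dimension n K E \<Longrightarrow> dm E = n"
  using dimI[OF K] unfolding over_def by blast

lemma isV_carrier: "isV V \<Longrightarrow> V \<subseteq> carrier R"
  using subalgebra_in_carrier by blast

lemma isV_fd: "isV V \<Longrightarrow> finite_dimension K V"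
  using subalbegra_incl_imp_finite_dimension[OF K fd] isV_carrier by blast

lemma isV_dim: "isV V \<Longrightarrow> dimension (dm V) K V"
  using isV_fd dmI finite_dimensionE[OF K] by metis

lemma isV_zero: "isV V \<Longrightarrow> \<zero> \<in> V"
  using subalgebra.axioms(1) subgroup.one_closed by fastforce
lemma isV_add: "isV V \<Longrightarrow> x \<in> V \<Longrightarrow> y \<in> V \<Longrightarrow> x \<oplus> y \<in> V"
  using subalgebra.axioms(1) subgroup.m_closed by fastforce
lemma isV_neg: "isV V \<Longrightarrow> x \<in> V \<Longrightarrow> \<ominus> x \<in> V"
  using space_subgroup_props(4)[OF K isV_dim] by blast
lemma isV_sub: "isV V \<Longrightarrow> x \<in> V \<Longrightarrow> y \<in> V \<Longrightarrow> x \<ominus> y \<in> V"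
  unfolding a_minus_def using isV_add isV_neg by blast
lemma isV_smult: "isV V \<Longrightarrow> k \<in> K \<Longrightarrow> x \<in> V \<Longrightarrow> k \<otimes> x \<in> V"
  by (rule subalgebra.smult_closed)

lemma isVI:
  assumes "V \<subseteq> carrier R" "\<zero> \<in> V" "\<And>x y. x \<in> V \<Longrightarrow> y \<in> V \<Longrightarrow> x \<oplus> y \<in> V"
    "\<And>k x. k \<in> K \<Longrightarrow> x \<in> V \<Longrightarrow> k \<otimes> x \<in> V"
  shows "isV V"
proof -
  have neg: "\<ominus> x \<in> V" if "x \<in> V" for x
  proof -
    have "\<ominus> \<one> \<in> K" using subringE(5)[OF subfieldE(1)[OF K]] Kone by blast
    hence "(\<ominus> \<one>) \<otimes> x \<in> V" using assms(4) that by blast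
    thus ?thesis using that assms(1) by (simp add: l_minus subsetD)
  qed
  have "subgroup V (add_monoid R)"
    using add.subgroupI[OF assms(1)] assms(2,3) neg by auto
  thus ?thesis using assms(4) unfolding subalgebra_def subalgebra_axioms_def by auto
qed

lemma carrier_isV: "isV (carrier R)" using carrier_is_subalgebra[OF Ksub] .

lemma dm_mono: assumes "isV V" "isV W" "V \<subseteq> W" shows "dm V \<le> dm W"
proof -
  obtain Us where Us: "set Us \<subseteq> carrier R" "independent K Us" "length Us = dm V" "Span K Us = V"
    using exists_base[OF K isV_dim[OF assms(1)]] by blast
  have "set Us \<subseteq> W" using Span_base_incl[OF K Us(1)] Us(4) assms(3) by blast
  thus ?thesis using independent_length_le_dimension[OF K isV_dim[OF assms(2)] Us(2)] Us(3) by simp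
qed

lemma dm_eq: assumes "isV V" "isV W" "V \<subseteq> W" "dm W \<le> dm V" shows "V = W"
proof -
  obtain Us where Us: "set Us \<subseteq> carrier R" "independent K Us" "length Us = dm V" "Span K Us = V"
    using exists_base[OF K isV_dim[OF assms(1)]] by blast
  have sub: "set Us \<subseteq> W" using Span_base_incl[OF K Us(1)] Us(4) assms(3) by blast
  have "length Us = dm W" using dm_mono[OF assms(1-3)] assms(4) Us(3) by simp
  thus ?thesis using independent_length_eq_dimension[OF K isV_dim[OF assms(2)] Us(2) sub] Us(4) by simp
qed

lemma dm_zero_iff: assumes "isV V" shows "dm V = 0 \<longleftrightarrow> V = {\<zero>}"
proof
  assume "dm V = 0"
  hence "dimension 0 K V" using isV_dim[OF assms] by simp
  thus "V = {\<zero>}" using dimension_zero[OF K] by blast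
next
  assume "V = {\<zero>}" thus "dm V = 0" using dmI[OF zero_dim] by simp
qed

lemma dm_le_total: "isV V \<Longrightarrow> dm V \<le> dm (carrier R)"
  using dm_mono carrier_isV isV_carrier by blast

lemma Span_isV: "set Us \<subseteq> carrier R \<Longrightarrow> isV (Span K Us)"
  using Span_is_subalgebra[OF K] .

lemma Span_dim_le: assumes "set Us \<subseteq> carrier R" shows "dm (Span K Us) \<le> length Us"
  using assms
proof (induct Us)
  case Nil thus ?case using dmI[OF zero_dim] by simp
next
  case (Cons u Us)
  have u: "u \<in> carrier R" and Us: "set Us \<subseteq> carrier R" using Cons by auto
  show ?case
  proof (cases "u \<in> Span K Us")
    case True
    have "Span K (u # Us) \<subseteq> Span K Us"
      using mono_Span_subset[OF K _ Us, of "u # Us"] True Span_base_incl[OF K Us] by auto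
    hence "Span K (u # Us) = Span K Us" using mono_Span[OF K Us u] by blast
    thus ?thesis using Cons(1)[OF Us] by simp
  next
    case False
    have "dimension (Suc (dm (Span K Us))) K (Span K (u # Us))"
      using Suc_dim[OF u False isV_dim[OF Span_isV[OF Us]]] by simp
    hence "dm (Span K (u # Us)) = Suc (dm (Span K Us))" by (rule dmI)
    thus ?thesis using Cons(1)[OF Us] by simp
  qed
qed

lemma sum_isV: assumes "isV V" "isV W" shows "isV (V <+>\<^bsub>R\<^esub> W)"
  using sum_space_dim(1)[OF K isV_fd[OF assms(1)] isV_fd[OF assms(2)]]
        finite_dimension_imp_subalgebra[OF K] by blast

lemma sum_dim: assumes "isV V" "isV W"
  shows "dm (V <+>\<^bsub>R\<^esub> W) + dm (V \<inter> W) = dm V + dm W"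
proof -
  have "dm (V \<inter> W) \<le> dm V" using dm_mono subalgebra_inter assms by blast
  thus ?thesis using sum_space_dim(2)[OF K isV_fd[OF assms(1)] isV_fd[OF assms(2)]]
    unfolding over_def by simp
qed

lemma inter_isV: "isV V \<Longrightarrow> isV W \<Longrightarrow> isV (V \<inter> W)" using subalgebra_inter by blast

lemma sum_mem: "x \<in> V \<Longrightarrow> y \<in> W \<Longrightarrow> x \<oplus> y \<in> V <+>\<^bsub>R\<^esub> W"
  unfolding set_add_def' by blast

lemma sum_memE: "z \<in> V <+>\<^bsub>R\<^esub> W \<Longrightarrow> \<exists>x\<in>V. \<exists>y\<in>W. z = x \<oplus> y"
  unfolding set_add_def' by blast

lemma sum_incl1: "isV V \<Longrightarrow> isV W \<Longrightarrow> V \<subseteq> V <+>\<^bsub>R\<^esub> W"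
proof
  fix x assume "isV V" "isV W" "x \<in> V"
  hence "x \<oplus> \<zero> \<in> V <+>\<^bsub>R\<^esub> W" using sum_mem isV_zero by blast
  thus "x \<in> V <+>\<^bsub>R\<^esub> W" using \<open>x \<in> V\<close> isV_carrier[OF \<open>isV V\<close>] by auto
qed

lemma sum_incl2: "isV V \<Longrightarrow> isV W \<Longrightarrow> W \<subseteq> V <+>\<^bsub>R\<^esub> W"
proof
  fix x assume "isV V" "isV W" "x \<in> W"
  hence "\<zero> \<oplus> x \<in> V <+>\<^bsub>R\<^esub> W" using sum_mem isV_zero by blast
  thus "x \<in> V <+>\<^bsub>R\<^esub> W" using \<open>x \<in> W\<close> isV_carrier[OF \<open>isV W\<close>] by auto
qed

lemma sum_min: assumes "isV U" "V \<subseteq> U" "W \<subseteq> U" shows "V <+>\<^bsub>R\<^esub> W \<subseteq> U"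
proof
  fix z assume "z \<in> V <+>\<^bsub>R\<^esub> W"
  then obtain x y where "x \<in> V" "y \<in> W" "z = x \<oplus> y" using sum_memE by blast
  thus "z \<in> U" using isV_add[OF assms(1)] assms(2,3) by blast
qed

end


context fext
begin

declare Span.simps[simp del]

abbreviation sp where "sp S \<equiv> span_set K S"

lemma sp_isV: assumes "S \<subseteq> carrier R" shows "isV (sp S)"
proof (rule isVI)
  show "sp S \<subseteq> carrier R" unfolding span_set_def
    using Span_in_carrier[OF Ksub] assms by blast
  have "Span K [] = {\<zero>}" "set [] \<subseteq> S" by (auto simp: Span.simps)
  thus "\<zero> \<in> sp S" unfolding span_set_def by blast
next
  fix x y assume "x \<in> sp S" "y \<in> sp S"
  then obtain Us Vs where U: "set Us \<subseteq> S" "x \<in> Span K Us" and V: "set Vs \<subseteq> S" "y \<in> Span K Vs"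
    unfolding span_set_def by blast
  have c: "set Us \<subseteq> carrier R" "set Vs \<subseteq> carrier R" using U V assms by auto
  have "x \<in> Span K (Us @ Vs)" using mono_Span_append(1)[OF K c] U by blast
  have "y \<in> Span K (Us @ Vs)" using mono_Span_append(2)[OF K c(2) c(1)] V by blast
  moreover have "set (Us @ Vs) \<subseteq> carrier R" using c by simp
  ultimately have "x \<oplus> y \<in> Span K (Us @ Vs)" using Span_subgroup_props(3)[OF K] \<open>x \<in> Span K (Us @ Vs)\<close> by blast
  moreover have "set (Us @ Vs) \<subseteq> S" using U V by simp
  ultimately show "x \<oplus> y \<in> sp S" unfolding span_set_def by blast
next
  fix k x assume "k \<in> K" "x \<in> sp S"
  then obtain Us where U: "set Us \<subseteq> S" "x \<in> Span K Us" unfolding span_set_def by blast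
  have c: "set Us \<subseteq> carrier R" using U assms by auto
  have "k \<otimes> x \<in> Span K Us" using Span_smult_closed[OF K c] U \<open>k \<in> K\<close> by blast
  thus "k \<otimes> x \<in> sp S" using U unfolding span_set_def by blast
qed

lemma sp_incl: assumes "S \<subseteq> carrier R" shows "S \<subseteq> sp S"
proof
  fix x assume x: "x \<in> S"
  have xc: "set [x] \<subseteq> carrier R" using x assms by auto
  have "x \<in> Span K [x]" using Span_base_incl[OF K xc] by simp
  moreover have "set [x] \<subseteq> S" using x by simp
  ultimately show "x \<in> sp S" unfolding span_set_def by blast
qed

lemma sp_min: assumes "isV V" "S \<subseteq> V" shows "sp S \<subseteq> V"
  unfolding span_set_def using subalgebra_Span_incl[OF K assms(1)] assms(2) by blast

lemma sp_idem: "isV V \<Longrightarrow> sp V = V"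
  using sp_min sp_incl isV_carrier by (meson subset_antisym subset_refl)

lemma sp_mono: "S \<subseteq> T \<Longrightarrow> T \<subseteq> carrier R \<Longrightarrow> sp S \<subseteq> sp T"
  using sp_min[OF sp_isV] sp_incl by (meson subset_trans)

lemma preim_isV: assumes "isV W" "c \<in> carrier R" shows "isV {v \<in> carrier R. c \<otimes> v \<in> W}"
proof (rule isVI)
  show "\<zero> \<in> {v \<in> carrier R. c \<otimes> v \<in> W}" using assms isV_zero by simp
next
  fix x y assume "x \<in> {v \<in> carrier R. c \<otimes> v \<in> W}" "y \<in> {v \<in> carrier R. c \<otimes> v \<in> W}"
  thus "x \<oplus> y \<in> {v \<in> carrier R. c \<otimes> v \<in> W}"
    using isV_add[OF assms(1)] assms(2) by (simp add: r_distr)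
next
  fix k x assume k: "k \<in> K" and "x \<in> {v \<in> carrier R. c \<otimes> v \<in> W}"
  hence x: "x \<in> carrier R" "c \<otimes> x \<in> W" by auto
  have kc: "k \<in> carrier R" using k Ksub by auto
  have "c \<otimes> (k \<otimes> x) = k \<otimes> (c \<otimes> x)" using kc x assms(2) m_lcomm by simp
  thus "k \<otimes> x \<in> {v \<in> carrier R. c \<otimes> v \<in> W}" using isV_smult[OF assms(1) k x(2)] kc x by simp
qed auto

definition sc where "sc c V = (\<lambda>v. c \<otimes> v) ` V"

lemma sc_isV: assumes "isV V" "c \<in> carrier R" shows "isV (sc c V)"
proof (rule isVI)
  show "sc c V \<subseteq> carrier R" unfolding sc_def using isV_carrier[OF assms(1)] assms(2) by auto
  show "\<zero> \<in> sc c V" unfolding sc_def using isV_zero[OF assms(1)] assms(2)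
    by (metis image_eqI r_null)
next
  fix x y assume "x \<in> sc c V" "y \<in> sc c V"
  then obtain x' y' where "x' \<in> V" "y' \<in> V" "x = c \<otimes> x'" "y = c \<otimes> y'" unfolding sc_def by blast
  moreover have "x' \<oplus> y' \<in> V" using isV_add[OF assms(1)] calculation by blast
  moreover have "c \<otimes> (x' \<oplus> y') = x \<oplus> y" using calculation isV_carrier[OF assms(1)] assms(2)
    by (simp add: r_distr subsetD)
  ultimately show "x \<oplus> y \<in> sc c V" unfolding sc_def by (metis image_eqI)
next
  fix k x assume k: "k \<in> K" and "x \<in> sc c V"
  then obtain x' where x': "x' \<in> V" "x = c \<otimes> x'" unfolding sc_def by blast
  have kc: "k \<in> carrier R" using k Ksub by auto
  have "k \<otimes> x = c \<otimes> (k \<otimes> x')" using x' kc assms(2) isV_carrier[OF assms(1)] m_lcomm by (simp add: subsetD)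
  moreover have "k \<otimes> x' \<in> V" using isV_smult[OF assms(1) k x'(1)] .
  ultimately show "k \<otimes> x \<in> sc c V" unfolding sc_def by blast
qed

lemma sc_sub: "isV V \<Longrightarrow> sc c V \<subseteq> W \<longleftrightarrow> V \<subseteq> {v \<in> carrier R. c \<otimes> v \<in> W}"
  unfolding sc_def using isV_carrier by blast

lemma sc_dim_le: assumes "isV V" "c \<in> carrier R" shows "dm (sc c V) \<le> dm V"
proof -
  obtain Us where Us: "set Us \<subseteq> carrier R" "independent K Us" "length Us = dm V" "Span K Us = V"
    using exists_base[OF K isV_dim[OF assms(1)]] by blast
  have mc: "set (map (\<lambda>v. c \<otimes> v) Us) \<subseteq> carrier R" using Us(1) assms(2) by auto
  let ?W = "Span K (map (\<lambda>v. c \<otimes> v) Us)"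
  have "set Us \<subseteq> {v \<in> carrier R. c \<otimes> v \<in> ?W}"
    using Span_base_incl[OF K mc] Us(1) by auto
  hence "V \<subseteq> {v \<in> carrier R. c \<otimes> v \<in> ?W}"
    using subalgebra_Span_incl[OF K preim_isV[OF Span_isV[OF mc] assms(2)]] Us(4) by blast
  hence "sc c V \<subseteq> ?W" using sc_sub[OF assms(1)] by blast
  hence "dm (sc c V) \<le> dm ?W" using dm_mono[OF sc_isV[OF assms] Span_isV[OF mc]] by blast
  also have "\<dots> \<le> length Us" using Span_dim_le[OF mc] by simp
  finally show ?thesis using Us(3) by simp
qed

lemma sc_sc: assumes "isV V" "c \<in> carrier R" "d \<in> carrier R" shows "sc d (sc c V) = sc (d \<otimes> c) V"
  unfolding sc_def using isV_carrier[OF assms(1)] assms(2,3) m_assoc by (auto simp: image_iff subsetD)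

lemma sc_one: assumes "isV V" shows "sc \<one> V = V"
proof -
  have "\<And>x. x \<in> V \<Longrightarrow> \<one> \<otimes> x = x" using isV_carrier[OF assms] by (simp add: subsetD)
  thus ?thesis unfolding sc_def by (simp add: image_cong)
qed

lemma sc_dim: assumes "isV V" "c \<in> carrier R" "c \<noteq> \<zero>" shows "dm (sc c V) = dm V"
proof -
  have ic: "inv c \<in> carrier R" "inv c \<otimes> c = \<one>" using assms(2,3) field_Units by auto
  have "sc (inv c) (sc c V) = V" using sc_sc[OF assms(1,2) ic(1)] ic(2) sc_one[OF assms(1)] by simp
  hence "dm V \<le> dm (sc c V)" using sc_dim_le[OF sc_isV[OF assms(1,2)] ic(1)] by simp
  thus ?thesis using sc_dim_le[OF assms(1,2)] by simp
qed

lemma sc_mem: "v \<in> V \<Longrightarrow> c \<otimes> v \<in> sc c V" unfolding sc_def by blast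

definition prd where "prd A Y = sp {x \<otimes> y | x y. x \<in> A \<and> y \<in> Y}"

lemma prd_gen_carrier: "A \<subseteq> carrier R \<Longrightarrow> Y \<subseteq> carrier R \<Longrightarrow> {x \<otimes> y | x y. x \<in> A \<and> y \<in> Y} \<subseteq> carrier R"
  by blast

lemma prd_isV: "A \<subseteq> carrier R \<Longrightarrow> Y \<subseteq> carrier R \<Longrightarrow> isV (prd A Y)"
  unfolding prd_def using sp_isV prd_gen_carrier by blast

lemma prd_mem:
  assumes a: "A \<subseteq> carrier R" "Y \<subseteq> carrier R" "x \<in> A" "y \<in> Y"
  shows "x \<otimes> y \<in> prd A Y"
proof -
  have g: "x \<otimes> y \<in> {u \<otimes> v | u v. u \<in> A \<and> v \<in> Y}" using a(3,4) by blast
  have "{u \<otimes> v | u v. u \<in> A \<and> v \<in> Y} \<subseteq> sp {u \<otimes> v | u v. u \<in> A \<and> v \<in> Y}"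
    by (rule sp_incl[OF prd_gen_carrier[OF a(1,2)]])
  with g have "x \<otimes> y \<in> sp {u \<otimes> v | u v. u \<in> A \<and> v \<in> Y}" by blast
  thus ?thesis unfolding prd_def .
qed

lemma prd_min: assumes "isV V" "\<And>x y. x \<in> A \<Longrightarrow> y \<in> Y \<Longrightarrow> x \<otimes> y \<in> V" shows "prd A Y \<subseteq> V"
proof -
  have "{x \<otimes> y | x y. x \<in> A \<and> y \<in> Y} \<subseteq> V" using assms(2) by blast
  thus ?thesis unfolding prd_def by (rule sp_min[OF assms(1)])
qed

lemma prd_mono: assumes "A \<subseteq> A'" "Y \<subseteq> Y'" "A' \<subseteq> carrier R" "Y' \<subseteq> carrier R"
  shows "prd A Y \<subseteq> prd A' Y'"
proof (rule prd_min[OF prd_isV[OF assms(3,4)]])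
  fix x y assume "x \<in> A" "y \<in> Y"
  thus "x \<otimes> y \<in> prd A' Y'" using prd_mem[OF assms(3,4)] assms(1,2) by blast
qed

lemma prd_comm: assumes "A \<subseteq> carrier R" "Y \<subseteq> carrier R" shows "prd A Y = prd Y A"
proof
  show "prd A Y \<subseteq> prd Y A"
  proof (rule prd_min[OF prd_isV[OF assms(2,1)]])
    fix x y assume "x \<in> A" "y \<in> Y"
    hence "x \<otimes> y = y \<otimes> x" using assms m_comm by blast
    thus "x \<otimes> y \<in> prd Y A" using prd_mem[OF assms(2,1) \<open>y \<in> Y\<close> \<open>x \<in> A\<close>] by simp
  qed
  show "prd Y A \<subseteq> prd A Y"
  proof (rule prd_min[OF prd_isV[OF assms(1,2)]])
    fix x y assume "x \<in> Y" "y \<in> A"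
    hence "x \<otimes> y = y \<otimes> x" using assms m_comm by blast
    thus "x \<otimes> y \<in> prd A Y" using prd_mem[OF assms(1,2) \<open>y \<in> A\<close> \<open>x \<in> Y\<close>] by simp
  qed
qed

lemma prd_contains: assumes "isV A" "Y \<subseteq> carrier R" "\<one> \<in> Y" shows "A \<subseteq> prd A Y"
proof
  fix x assume "x \<in> A"
  hence "x \<otimes> \<one> \<in> prd A Y" using prd_mem[OF isV_carrier[OF assms(1)] assms(2) _ assms(3)] by blast
  thus "x \<in> prd A Y" using \<open>x \<in> A\<close> isV_carrier[OF assms(1)] by (simp add: subsetD)
qed

lemma prd_sum: assumes "isV A" "isV A'" "Y \<subseteq> carrier R"
  shows "prd (A <+>\<^bsub>R\<^esub> A') Y = prd A Y <+>\<^bsub>R\<^esub> prd A' Y"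
proof
  have c: "A \<subseteq> carrier R" "A' \<subseteq> carrier R" "A <+>\<^bsub>R\<^esub> A' \<subseteq> carrier R"
    using isV_carrier assms sum_isV by blast+
  show "prd (A <+>\<^bsub>R\<^esub> A') Y \<subseteq> prd A Y <+>\<^bsub>R\<^esub> prd A' Y"
  proof (rule prd_min[OF sum_isV[OF prd_isV prd_isV]])
    show "A \<subseteq> carrier R" "Y \<subseteq> carrier R" "A' \<subseteq> carrier R" "Y \<subseteq> carrier R" using c assms by auto
    fix z y assume z: "z \<in> A <+>\<^bsub>R\<^esub> A'" and y: "y \<in> Y"
    then obtain x x' where x: "x \<in> A" "x' \<in> A'" "z = x \<oplus> x'" using sum_memE by blast
    have "z \<otimes> y = x \<otimes> y \<oplus> x' \<otimes> y" using x y c assms(3) by (simp add: l_distr subsetD)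
    thus "z \<otimes> y \<in> prd A Y <+>\<^bsub>R\<^esub> prd A' Y" using sum_mem prd_mem x y c assms(3) by metis
  qed
  show "prd A Y <+>\<^bsub>R\<^esub> prd A' Y \<subseteq> prd (A <+>\<^bsub>R\<^esub> A') Y"
    using sum_min[OF prd_isV[OF c(3) assms(3)]] prd_mono[OF _ _ c(3) assms(3)]
          sum_incl1[OF assms(1,2)] sum_incl2[OF assms(1,2)] by blast
qed

lemma prd_sc: assumes "isV A" "Y \<subseteq> carrier R" "c \<in> carrier R"
  shows "prd (sc c A) Y = sc c (prd A Y)"
proof
  have cX: "A \<subseteq> carrier R" using isV_carrier assms(1) by blast
  have cS: "sc c A \<subseteq> carrier R" using isV_carrier[OF sc_isV[OF assms(1,3)]] .
  show "prd (sc c A) Y \<subseteq> sc c (prd A Y)"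
  proof (rule prd_min[OF sc_isV[OF prd_isV[OF cX assms(2)] assms(3)]])
    fix z y assume "z \<in> sc c A" "y \<in> Y"
    then obtain x where x: "x \<in> A" "z = c \<otimes> x" unfolding sc_def by blast
    have "z \<otimes> y = c \<otimes> (x \<otimes> y)" using x \<open>y \<in> Y\<close> cX assms(2,3) m_assoc by (simp add: subsetD)
    thus "z \<otimes> y \<in> sc c (prd A Y)" using sc_mem prd_mem[OF cX assms(2) x(1) \<open>y \<in> Y\<close>] by metis
  qed
  have "prd A Y \<subseteq> {v \<in> carrier R. c \<otimes> v \<in> prd (sc c A) Y}"
  proof (rule prd_min[OF preim_isV[OF prd_isV[OF cS assms(2)] assms(3)]])
    fix x y assume "x \<in> A" "y \<in> Y"
    have "c \<otimes> (x \<otimes> y) = (c \<otimes> x) \<otimes> y" using \<open>x \<in> A\<close> \<open>y \<in> Y\<close> cX assms(2,3) m_assoc by (simp add: subsetD)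
    moreover have "(c \<otimes> x) \<otimes> y \<in> prd (sc c A) Y" using prd_mem[OF cS assms(2)] sc_mem \<open>x \<in> A\<close> \<open>y \<in> Y\<close> by blast
    ultimately show "x \<otimes> y \<in> {v \<in> carrier R. c \<otimes> v \<in> prd (sc c A) Y}"
      using \<open>x \<in> A\<close> \<open>y \<in> Y\<close> cX assms(2) by auto
  qed
  thus "sc c (prd A Y) \<subseteq> prd (sc c A) Y" using sc_sub[OF prd_isV[OF cX assms(2)]] by blast
qed

end


context fext
begin

declare Span.simps[simp del]

lemma K_isV: "isV K"
  by (rule isVI) (auto simp: Ksub subringE[OF subfieldE(1)[OF K]])

lemma dm_K: "dm K = 1" using dmI[OF dimension_one[OF K]] .

lemma subfield_isV: assumes "subfield F R" "K \<subseteq> F" shows "isV F"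
  by (rule isVI) (use assms subringE[OF subfieldE(1)[OF assms(1)]] in blast)+

lemma sum_dim_le: "isV V \<Longrightarrow> isV V' \<Longrightarrow> dm (V <+>\<^bsub>R\<^esub> V') \<le> dm V + dm V'"
  using sum_dim by fastforce

lemma hyp_exists: assumes "subfield F R" "K \<subseteq> F"
  shows "\<exists>W. isV W \<and> W \<subseteq> F \<and> \<one> \<notin> W \<and> Suc (dm W) = dm F"
proof -
  have FV: "isV F" using subfield_isV[OF assms] .
  have oneF: "\<one> \<in> F" using subringE(3)[OF subfieldE(1)[OF assms(1)]] .
  have "\<one> \<notin> Span K []" by (simp add: Span.simps)
  hence ind: "independent K [\<one>]" using li_Cons[of \<one> K "[]"] by simp
  obtain Vs where Vs: "length (Vs @ [\<one>]) = dm F" "independent K (Vs @ [\<one>])" "Span K (Vs @ [\<one>]) = F"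
    using complete_base[OF K isV_dim[OF FV] ind] oneF by auto
  have c: "set Vs \<subseteq> carrier R" "set [\<one>] \<subseteq> carrier R" using independent_in_carrier[OF Vs(2)] by auto
  have "Span K Vs \<subseteq> F" using mono_Span_append(1)[OF K c] Vs(3) by simp
  moreover have "\<one> \<notin> Span K Vs"
  proof
    assume "\<one> \<in> Span K Vs"
    moreover have "\<one> \<in> Span K [\<one>]" using Span_base_incl[OF K c(2)] by simp
    ultimately have "\<one> \<in> {\<zero>}" using independent_split(3)[OF K Vs(2)] by blast
    thus False by simp
  qed
  moreover have "dm (Span K Vs) = length Vs"
    using dmI[OF dimension_independent[OF independent_split(2)[OF K Vs(2)]]] .
  ultimately show ?thesis using Span_isV[OF c(1)] Vs(1) by (intro exI[of _ "Span K Vs"]) auto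
qed

end

locale amb = fext +
  fixes F W
  assumes F: "subfield F R" and KF: "K \<subseteq> F"
    and W: "isV W" "W \<subseteq> F" "\<one> \<notin> W" "Suc (dm W) = dm F"
begin

declare Span.simps[simp del]

lemma FV: "isV F" using subfield_isV[OF F KF] .
lemma Fc: "F \<subseteq> carrier R" using subfieldE(3)[OF F] .
lemma F_one: "\<one> \<in> F" using subringE(3)[OF subfieldE(1)[OF F]] .
lemma F_mult: "x \<in> F \<Longrightarrow> y \<in> F \<Longrightarrow> x \<otimes> y \<in> F" using subringE(6)[OF subfieldE(1)[OF F]] by blast
lemma F_inv: "x \<in> F \<Longrightarrow> x \<noteq> \<zero> \<Longrightarrow> inv x \<in> F" using subfield_m_inv(1)[OF F] by blast
lemma F_inv2: "x \<in> F \<Longrightarrow> x \<noteq> \<zero> \<Longrightarrow> x \<otimes> inv x = \<one>" using subfield_m_inv(2)[OF F] by blast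

definition perp where "perp U = {y \<in> F. \<forall>u \<in> U. y \<otimes> u \<in> W}"

lemma perp_isV: assumes "U \<subseteq> carrier R" shows "isV (perp U)"
proof (rule isVI)
  show "perp U \<subseteq> carrier R" unfolding perp_def using Fc by blast
  show "\<zero> \<in> perp U" unfolding perp_def using isV_zero[OF W(1)] isV_zero[OF FV] assms by auto
next
  fix x y assume "x \<in> perp U" "y \<in> perp U"
  thus "x \<oplus> y \<in> perp U" unfolding perp_def using isV_add[OF FV] isV_add[OF W(1)] Fc assms
    by (auto simp: l_distr subsetD)
next
  fix k x assume k: "k \<in> K" and "x \<in> perp U"
  thus "k \<otimes> x \<in> perp U" unfolding perp_def using isV_smult[OF FV] isV_smult[OF W(1)] Fc assms Ksub
    by (auto simp: m_assoc subsetD)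
qed

lemma perp_anti: "U \<subseteq> U' \<Longrightarrow> perp U' \<subseteq> perp U" unfolding perp_def by blast

lemma perp_Span: assumes "set Us \<subseteq> carrier R" shows "perp (Span K Us) = perp (set Us)"
proof
  show "perp (Span K Us) \<subseteq> perp (set Us)" using perp_anti Span_base_incl[OF K assms] by blast
  show "perp (set Us) \<subseteq> perp (Span K Us)"
  proof
    fix y assume y: "y \<in> perp (set Us)"
    hence yc: "y \<in> carrier R" "y \<in> F" unfolding perp_def using Fc by auto
    have "set Us \<subseteq> {v \<in> carrier R. y \<otimes> v \<in> W}" using y assms unfolding perp_def by auto
    hence "Span K Us \<subseteq> {v \<in> carrier R. y \<otimes> v \<in> W}"
      using subalgebra_Span_incl[OF K preim_isV[OF W(1) yc(1)]] by blast
    thus "y \<in> perp (Span K Us)" unfolding perp_def using yc by blast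
  qed
qed

lemma perp_F: "perp F = {\<zero>}"
proof -
  have "y = \<zero>" if "y \<in> perp F" for y
  proof (rule ccontr)
    assume nz: "y \<noteq> \<zero>"
    have yF: "y \<in> F" using that unfolding perp_def by blast
    hence "y \<otimes> inv y \<in> W" using that F_inv[OF yF nz] unfolding perp_def by blast
    thus False using F_inv2[OF yF nz] W(3) by simp
  qed
  thus ?thesis using isV_zero[OF perp_isV[OF Fc]] by blast
qed

lemma hyper_sum: assumes z: "z \<in> F" "z \<notin> W" shows "W <+>\<^bsub>R\<^esub> sc z K = F"
proof -
  have zc: "z \<in> carrier R" using z Fc by blast
  have zK: "isV (sc z K)" using sc_isV[OF K_isV zc] .
  have znz: "z \<noteq> \<zero>" using z isV_zero[OF W(1)] by blast
  have "W \<inter> sc z K \<subseteq> {\<zero>}"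
  proof
    fix v assume v: "v \<in> W \<inter> sc z K"
    then obtain k where k: "k \<in> K" "v = z \<otimes> k" unfolding sc_def by blast
    show "v \<in> {\<zero>}"
    proof (rule ccontr)
      assume "v \<notin> {\<zero>}"
      hence knz: "k \<noteq> \<zero>" using k zc Ksub by auto
      have ik: "inv k \<in> K" "inv k \<otimes> k = \<one>" using subfield_m_inv[OF K] k knz by auto
      have kc: "k \<in> carrier R" "inv k \<in> carrier R" using k ik Ksub by auto
      have "inv k \<otimes> v \<in> W" using isV_smult[OF W(1) ik(1)] v by blast
      moreover have "inv k \<otimes> v = z"
      proof -
        have "inv k \<otimes> v = inv k \<otimes> (k \<otimes> z)" using k(2) m_comm[OF zc kc(1)] by simp
        also have "\<dots> = (inv k \<otimes> k) \<otimes> z" using m_assoc[OF kc(2) kc(1) zc] by simp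
        finally show ?thesis using ik(2) zc by simp
      qed
      ultimately show False using z by simp
    qed
  qed
  moreover have "\<zero> \<in> W \<inter> sc z K" using isV_zero[OF W(1)] isV_zero[OF zK] by blast
  ultimately have int: "W \<inter> sc z K = {\<zero>}" by blast
  have "dm (sc z K) = 1" using sc_dim[OF K_isV zc znz] dm_K by simp
  hence d: "dm (W <+>\<^bsub>R\<^esub> sc z K) = dm F"
    using sum_dim[OF W(1) zK] int dm_zero_iff[OF inter_isV[OF W(1) zK]] W(4) by simp
  have sub: "W <+>\<^bsub>R\<^esub> sc z K \<subseteq> F"
  proof (rule sum_min[OF FV W(2)])
    show "sc z K \<subseteq> F" unfolding sc_def using z KF F_mult by blast
  qed
  show ?thesis using dm_eq[OF sum_isV[OF W(1) zK] FV sub] d by simp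
qed

lemma hyperplane: assumes V: "isV V" "V \<subseteq> F" and u: "u \<in> F"
  shows "dm V \<le> dm (V \<inter> perp {u}) + 1"
proof (cases "V \<subseteq> perp {u}")
  case True thus ?thesis by (simp add: Int_absorb2)
next
  case False
  then obtain v0 where v0: "v0 \<in> V" "v0 \<otimes> u \<notin> W" using V unfolding perp_def by blast
  have v0c: "v0 \<in> carrier R" "v0 \<in> F" using v0 V Fc by auto
  have uc: "u \<in> carrier R" using u Fc by auto
  have zF: "v0 \<otimes> u \<in> F" using F_mult v0c u by blast
  have HV: "isV (V \<inter> perp {u})" using inter_isV[OF V(1) perp_isV] uc by auto
  have sV: "isV (sc v0 K)" using sc_isV[OF K_isV v0c(1)] .
  have "V \<subseteq> (V \<inter> perp {u}) <+>\<^bsub>R\<^esub> sc v0 K"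
  proof
    fix y assume y: "y \<in> V"
    have yc: "y \<in> carrier R" "y \<in> F" using y V Fc by auto
    have "y \<otimes> u \<in> W <+>\<^bsub>R\<^esub> sc (v0 \<otimes> u) K" using hyper_sum[OF zF v0(2)] F_mult yc(2) u by blast
    then obtain w t where wt: "w \<in> W" "t \<in> sc (v0 \<otimes> u) K" "y \<otimes> u = w \<oplus> t" using sum_memE by blast
    then obtain k where k: "k \<in> K" "t = (v0 \<otimes> u) \<otimes> k" unfolding sc_def by blast
    have kc: "k \<in> carrier R" using k Ksub by auto
    have wc: "w \<in> carrier R" using wt W(2) Fc by auto
    define y' where "y' = y \<ominus> k \<otimes> v0"
    have y'V: "y' \<in> V" unfolding y'_def using isV_sub[OF V(1) y isV_smult[OF V(1) k(1) v0(1)]] .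
    have "y' \<otimes> u = y \<otimes> u \<ominus> (v0 \<otimes> u) \<otimes> k" unfolding y'_def using yc kc v0c uc
      by algebra
    also have "\<dots> = w" using wt(3) k(2) wc kc v0c uc by algebra
    finally have "y' \<otimes> u \<in> W" using wt(1) by simp
    hence "y' \<in> V \<inter> perp {u}" using y'V V(2) unfolding perp_def by auto
    moreover have "v0 \<otimes> k \<in> sc v0 K" using sc_mem k(1) .
    moreover have "y = y' \<oplus> v0 \<otimes> k" unfolding y'_def using yc kc v0c
      by algebra
    ultimately show "y \<in> (V \<inter> perp {u}) <+>\<^bsub>R\<^esub> sc v0 K" using sum_mem by metis
  qed
  hence "dm V \<le> dm ((V \<inter> perp {u}) <+>\<^bsub>R\<^esub> sc v0 K)" using dm_mono[OF V(1) sum_isV[OF HV sV]] by blast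
  also have "\<dots> \<le> dm (V \<inter> perp {u}) + dm (sc v0 K)" using sum_dim_le[OF HV sV] .
  also have "dm (sc v0 K) \<le> 1" using sc_dim_le[OF K_isV v0c(1)] dm_K by simp
  finally show ?thesis by simp
qed

lemma hyperplanes: assumes "set Us \<subseteq> F"
  shows "isV V \<Longrightarrow> V \<subseteq> F \<Longrightarrow> dm V \<le> dm (V \<inter> perp (set Us)) + length Us"
  using assms
proof (induct Us arbitrary: V)
  case Nil thus ?case unfolding perp_def using Fc by (simp add: Int_absorb2 subset_iff)
next
  case (Cons u Us)
  have u: "u \<in> F" and Us: "set Us \<subseteq> F" using Cons by auto
  have HV: "isV (V \<inter> perp {u})" using inter_isV[OF Cons(2) perp_isV] u Fc by auto
  have "dm V \<le> dm (V \<inter> perp {u}) + 1" using hyperplane[OF Cons(2,3) u] .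
  also have "dm (V \<inter> perp {u}) \<le> dm ((V \<inter> perp {u}) \<inter> perp (set Us)) + length Us"
    using Cons(1)[OF HV _ Us] Cons(3) by blast
  also have "(V \<inter> perp {u}) \<inter> perp (set Us) = V \<inter> perp (set (u # Us))" unfolding perp_def by auto
  finally show ?case by simp
qed

lemma perp_dim: assumes "isV U" "U \<subseteq> F" shows "dm (perp U) + dm U = dm F"
proof -
  obtain Us where Us: "set Us \<subseteq> carrier R" "independent K Us" "length Us = dm U" "Span K Us = U"
    using exists_base[OF K isV_dim[OF assms(1)]] by blast
  have UsF: "set Us \<subseteq> F" using Span_base_incl[OF K Us(1)] Us(4) assms(2) by blast
  have pU: "perp U = perp (set Us)" using perp_Span[OF Us(1)] Us(4) by simp
  have pV: "isV (perp U)" using perp_isV[OF isV_carrier[OF assms(1)]] .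
  have "dm F \<le> dm (F \<inter> perp (set Us)) + length Us" using hyperplanes[OF UsF FV] by simp
  moreover have "F \<inter> perp (set Us) = perp U" using pU unfolding perp_def by blast
  ultimately have lo: "dm F \<le> dm (perp U) + dm U" using Us(3) by simp
  obtain Vs where Vs: "length (Vs @ Us) = dm F" "independent K (Vs @ Us)" "Span K (Vs @ Us) = F"
    using complete_base[OF K isV_dim[OF FV] Us(2) UsF] by blast
  have VUc: "set (Vs @ Us) \<subseteq> carrier R" using independent_in_carrier[OF Vs(2)] .
  have VsF: "set Vs \<subseteq> F" using Span_base_incl[OF K VUc] Vs(3) by auto
  have "perp (set (Vs @ Us)) = {\<zero>}" using perp_Span[OF VUc] Vs(3) perp_F by simp
  hence z: "perp U \<inter> perp (set Vs) = {\<zero>}" using pU unfolding perp_def by auto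
  have "dm (perp U) \<le> dm (perp U \<inter> perp (set Vs)) + length Vs"
    using hyperplanes[OF VsF pV] pU unfolding perp_def by blast
  hence "dm (perp U) \<le> length Vs" using z dmI[OF zero_dim] by simp
  thus ?thesis using lo Vs(1) Us(3) by simp
qed

end


lemma arith1: "(p::nat) + (q::nat) \<le> 2*((a::nat)+(k::nat)) \<Longrightarrow> s + k \<le> q \<Longrightarrow> i + b = p \<Longrightarrow> i + b + (s + k) \<le> 2*a + 2*k"
  by arith
lemma arith2: "(i::nat) + (b::nat) + ((s::nat) + (k::nat)) \<le> 2*a + 2*k \<Longrightarrow> s + i = 2*a \<Longrightarrow> b \<le> k"
  by arith

locale amb2 = amb +
  fixes B assumes B: "isV B" "B \<subseteq> F" "\<one> \<in> B" "B \<noteq> F"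
begin

declare Span.simps[simp del]

lemma Bc: "B \<subseteq> carrier R" using B(2) Fc by blast

definition frag where "frag A \<longleftrightarrow> isV A \<and> A \<subseteq> F \<and> A \<noteq> {\<zero>} \<and> prd A B \<noteq> F"
definition bd where "bd A = dm (prd A B) - dm A"

lemma prd_F: assumes "A \<subseteq> F" shows "prd A B \<subseteq> F"
  by (rule prd_min[OF FV]) (use assms B(2) F_mult in blast)

lemma prd_V: "A \<subseteq> F \<Longrightarrow> isV (prd A B)" using prd_isV Fc Bc by blast

lemma frag_dm: assumes "frag A" shows "dm A + bd A = dm (prd A B)" "dm (prd A B) < dm F" "0 < dm A"
proof -
  have A: "isV A" "A \<subseteq> F" "A \<noteq> {\<zero>}" "prd A B \<noteq> F" using assms unfolding frag_def by auto
  have "A \<subseteq> prd A B" using prd_contains[OF A(1) Bc B(3)] .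
  thus "dm A + bd A = dm (prd A B)" unfolding bd_def using dm_mono[OF A(1) prd_V[OF A(2)]] by simp
  show "dm (prd A B) < dm F"
    using dm_mono[OF prd_V[OF A(2)] FV prd_F[OF A(2)]] dm_eq[OF prd_V[OF A(2)] FV prd_F[OF A(2)]] A(4)
    by fastforce
  show "0 < dm A" using dm_zero_iff[OF A(1)] A(3) by simp
qed

lemma prd_K: "prd K B = B"
proof
  show "prd K B \<subseteq> B" by (rule prd_min[OF B(1)]) (use isV_smult[OF B(1)] in blast)
  have "B \<subseteq> prd B K" using prd_contains[OF B(1) Ksub Kone] .
  thus "B \<subseteq> prd K B" using prd_comm[OF Bc Ksub] by simp
qed

lemma frag_K: "frag K"
  unfolding frag_def using K_isV KF prd_K B(4) Kone subfieldE(6)[OF K] by auto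

definition kap where "kap = (LEAST k. \<exists>A. frag A \<and> bd A = k)"

lemma kap_ex: "\<exists>A. frag A \<and> bd A = kap"
  unfolding kap_def by (rule LeastI_ex) (use frag_K in blast)

lemma kap_le: "frag A \<Longrightarrow> kap \<le> bd A"
  unfolding kap_def by (rule Least_le) blast

definition atd where "atd = (LEAST d. \<exists>A. frag A \<and> bd A = kap \<and> dm A = d)"

lemma atd_ex: "\<exists>A. frag A \<and> bd A = kap \<and> dm A = atd"
  unfolding atd_def by (rule LeastI_ex) (use kap_ex in blast)

lemma atd_le: "frag A \<Longrightarrow> bd A = kap \<Longrightarrow> atd \<le> dm A"
  unfolding atd_def by (rule Least_le) blast

lemma dual: assumes "frag A"
  shows "frag (perp (prd A B))" "bd (perp (prd A B)) \<le> bd A"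
    "dm (perp (prd A B)) + dm (prd A B) = dm F"
proof -
  have A: "isV A" "A \<subseteq> F" "A \<noteq> {\<zero>}" "prd A B \<noteq> F" using assms unfolding frag_def by auto
  have Ac: "A \<subseteq> carrier R" using A(2) Fc by blast
  let ?P = "prd A B"
  let ?Y = "perp ?P"
  have PV: "isV ?P" using prd_V[OF A(2)] .
  have PF: "?P \<subseteq> F" using prd_F[OF A(2)] .
  have YV: "isV ?Y" using perp_isV[OF isV_carrier[OF PV]] .
  have YF: "?Y \<subseteq> F" unfolding perp_def by blast
  show dY: "dm ?Y + dm ?P = dm F" using perp_dim[OF PV PF] .
  have d: "dm A + bd A = dm ?P" "dm ?P < dm F" "0 < dm A" using frag_dm[OF assms] .
  have Ynz: "?Y \<noteq> {\<zero>}" using dY d(2) dm_zero_iff[OF YV] by auto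
  have sub: "prd ?Y B \<subseteq> perp A"
  proof (rule prd_min[OF perp_isV[OF Ac]])
    fix y b assume y: "y \<in> ?Y" and b: "b \<in> B"
    have yF: "y \<in> F" using y YF by blast
    have bF: "b \<in> F" using b B(2) by blast
    have "\<forall>x \<in> A. (y \<otimes> b) \<otimes> x \<in> W"
    proof
      fix x assume x: "x \<in> A"
      have "x \<otimes> b \<in> ?P" using prd_mem[OF Ac Bc x b] .
      hence "y \<otimes> (x \<otimes> b) \<in> W" using y unfolding perp_def by blast
      moreover have "(y \<otimes> b) \<otimes> x = y \<otimes> (x \<otimes> b)"
      proof -
        have c: "y \<in> carrier R" "b \<in> carrier R" "x \<in> carrier R" using yF bF x Ac Fc by auto
        thus ?thesis by algebra
      qed
      ultimately show "(y \<otimes> b) \<otimes> x \<in> W" by simp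
    qed
    thus "y \<otimes> b \<in> perp A" unfolding perp_def using F_mult[OF yF bF] by blast
  qed
  have dpA: "dm (perp A) + dm A = dm F" using perp_dim[OF A(1,2)] .
  have le: "dm (prd ?Y B) \<le> dm (perp A)" using dm_mono[OF prd_V[OF YF] perp_isV[OF Ac] sub] .
  have "prd ?Y B \<noteq> F" using le dpA d(3) by auto
  thus "frag ?Y" unfolding frag_def using YV YF Ynz by blast
  show "bd ?Y \<le> bd A" unfolding bd_def using le dpA dY d by linarith
qed

lemma atom_small: assumes "frag A" "bd A = kap" "dm A = atd" shows "2 * atd + kap \<le> dm F"
proof -
  have f: "frag (perp (prd A B))" "bd (perp (prd A B)) \<le> bd A"
      "dm (perp (prd A B)) + dm (prd A B) = dm F" using dual[OF assms(1)] by auto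
  have "kap \<le> bd (perp (prd A B))" using kap_le[OF f(1)] .
  hence "bd (perp (prd A B)) = kap" using f(2) assms(2) by simp
  hence "atd \<le> dm (perp (prd A B))" using atd_le[OF f(1)] by simp
  thus ?thesis using f(3) frag_dm(1)[OF assms(1)] assms(2,3) by simp
qed

lemma scale_frag: assumes "frag A" "c \<in> F" "c \<noteq> \<zero>"
  shows "frag (sc c A)" "bd (sc c A) = bd A" "dm (sc c A) = dm A"
proof -
  have A: "isV A" "A \<subseteq> F" "A \<noteq> {\<zero>}" "prd A B \<noteq> F" using assms unfolding frag_def by auto
  have cc: "c \<in> carrier R" using assms(2) Fc by blast
  have e: "prd (sc c A) B = sc c (prd A B)" using prd_sc[OF A(1) Bc cc] .
  have PV: "isV (prd A B)" using prd_V[OF A(2)] .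
  show d: "dm (sc c A) = dm A" using sc_dim[OF A(1) cc assms(3)] .
  have d2: "dm (prd (sc c A) B) = dm (prd A B)" using e sc_dim[OF PV cc assms(3)] by simp
  thus "bd (sc c A) = bd A" unfolding bd_def using d by simp
  have sF: "sc c A \<subseteq> F" unfolding sc_def using A(2) assms(2) F_mult by blast
  have sV: "isV (sc c A)" using sc_isV[OF A(1) cc] .
  have "sc c A \<noteq> {\<zero>}" using d dm_zero_iff[OF sV] dm_zero_iff[OF A(1)] A(3) by simp
  moreover have "prd (sc c A) B \<noteq> F" using d2 frag_dm(2)[OF assms(1)] by auto
  ultimately show "frag (sc c A)" unfolding frag_def using sV sF by blast
qed

lemma atom_inter: assumes "frag A" "bd A = kap" "dm A = atd" "frag A'" "bd A' = kap" "dm A' = atd"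
  and "A \<inter> A' \<noteq> {\<zero>}"
  shows "A \<subseteq> A'"
proof -
  have X: "isV A" "A \<subseteq> F" "isV A'" "A' \<subseteq> F" using assms unfolding frag_def by auto
  let ?I = "A \<inter> A'" and ?S = "A <+>\<^bsub>R\<^esub> A'"
  have IV: "isV ?I" using inter_isV X by blast
  have SV: "isV ?S" using sum_isV X by blast
  have IF: "?I \<subseteq> F" using X by blast
  have SF: "?S \<subseteq> F" using sum_min[OF FV] X by blast
  have PV: "isV (prd A B)" "isV (prd A' B)" using prd_V X by blast+
  have eS: "prd ?S B = prd A B <+>\<^bsub>R\<^esub> prd A' B" using prd_sum[OF X(1,3) Bc] .
  have Isub: "prd ?I B \<subseteq> prd A B \<inter> prd A' B"
    using prd_mono[OF _ _ _ Bc] X Fc by (meson Int_lower1 Int_lower2 le_inf_iff order_refl subset_trans)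
  have dP: "dm (prd A B) = atd + kap" "dm (prd A' B) = atd + kap"
    using frag_dm(1)[OF assms(1)] frag_dm(1)[OF assms(4)] assms by simp_all
  have sumP: "dm (prd ?S B) + dm (prd A B \<inter> prd A' B) = 2 * (atd + kap)"
    using sum_dim[OF PV] eS dP by simp
  have dII: "dm (prd ?I B) \<le> dm (prd A B \<inter> prd A' B)"
    using dm_mono[OF prd_V[OF IF] inter_isV[OF PV] Isub] .
  have fI: "frag ?I"
  proof -
    have "prd ?I B \<noteq> F"
    proof
      assume "prd ?I B = F"
      hence "F \<subseteq> prd A B" using Isub by blast
      thus False using prd_F[OF X(2)] assms(1) unfolding frag_def by blast
    qed
    thus ?thesis unfolding frag_def using IV IF assms(7) by blast
  qed
  have dI: "dm ?I + bd ?I = dm (prd ?I B)" "0 < dm ?I" using frag_dm[OF fI] by auto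
  have kI: "kap \<le> bd ?I" using kap_le[OF fI] .
  have small: "2 * atd + kap \<le> dm F" using atom_small[OF assms(1-3)] .
  have ge: "1 + kap \<le> dm (prd A B \<inter> prd A' B)" using dII dI kI by linarith
  have "dm (prd ?S B) < dm F"
  proof -
    have "dm (prd ?S B) + (1 + kap) \<le> 2 * (atd + kap)" using sumP ge by linarith
    thus ?thesis using small by presburger
  qed
  hence pS: "prd ?S B \<noteq> F" by auto
  have "A \<subseteq> ?S" using sum_incl1 X by blast
  hence "?S \<noteq> {\<zero>}" using assms(1) isV_zero[OF X(1)] unfolding frag_def by blast
  hence fS: "frag ?S" unfolding frag_def using SV SF pS by blast
  have dS: "dm ?S + bd ?S = dm (prd ?S B)" using frag_dm(1)[OF fS] .
  have kS: "kap \<le> bd ?S" using kap_le[OF fS] .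
  have sumX: "dm ?S + dm ?I = 2 * atd" using sum_dim[OF X(1,3)] assms(3,6) by simp
  have h1: "dm (prd ?I B) + dm (prd ?S B) \<le> 2 * (atd + kap)" using sumP dII by presburger
  have h2: "dm ?S + kap \<le> dm (prd ?S B)" using dS kS by presburger
  have h3: "dm ?I + bd ?I + (dm ?S + kap) \<le> 2 * atd + 2 * kap" by (rule arith1[OF h1 h2 dI(1)])
  have "bd ?I \<le> kap" by (rule arith2[OF h3 sumX])
  hence "bd ?I = kap" using kI by simp
  hence "atd \<le> dm ?I" using atd_le[OF fI] by simp
  hence "?I = A" using dm_eq[OF IV X(1)] assms(3) by auto
  thus ?thesis by blast
qed

lemma atom_field: "\<exists>H. frag H \<and> bd H = kap \<and> \<one> \<in> H \<and> (\<forall>h1\<in>H. \<forall>h2\<in>H. h1 \<otimes> h2 \<in> H)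
   \<and> (\<forall>h\<in>H. h \<noteq> \<zero> \<longrightarrow> inv h \<in> H)"
proof -
  obtain A where A: "frag A" "bd A = kap" "dm A = atd" using atd_ex by blast
  have AV: "isV A" "A \<subseteq> F" "A \<noteq> {\<zero>}" using A(1) unfolding frag_def by auto
  obtain x where x: "x \<in> A" "x \<noteq> \<zero>" using AV(3) isV_zero[OF AV(1)] by blast
  have xF: "x \<in> F" using x AV(2) by blast
  have ix: "inv x \<in> F" "inv x \<noteq> \<zero>" using F_inv[OF xF x(2)] subfield_m_inv(1)[OF F] xF x(2) by auto
  define H where "H = sc (inv x) A"
  have H: "frag H" "bd H = kap" "dm H = atd" unfolding H_def using scale_frag[OF A(1) ix] A by auto
  have HV: "isV H" "H \<subseteq> F" using H(1) unfolding frag_def by auto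
  have "inv x \<otimes> x = \<one>" using subfield_m_inv(3)[OF F] xF x(2) by blast
  hence one: "\<one> \<in> H" unfolding H_def using sc_mem[OF x(1)] by metis
  have incl: "H \<subseteq> sc h H" if h: "h \<in> H" "h \<noteq> \<zero>" for h
  proof -
    have hF: "h \<in> F" using h HV by blast
    have f: "frag (sc h H)" "bd (sc h H) = kap" "dm (sc h H) = atd" using scale_frag[OF H(1) hF h(2)] H by auto
    have "h \<otimes> \<one> \<in> sc h H" using sc_mem[OF one] .
    hence "h \<in> H \<inter> sc h H" using h hF Fc by auto
    hence "H \<inter> sc h H \<noteq> {\<zero>}" using h(2) by blast
    thus ?thesis using atom_inter[OF H f] by blast
  qed
  have inv: "inv h \<in> H" if h: "h \<in> H" "h \<noteq> \<zero>" for h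
  proof -
    have hF: "h \<in> F" using h HV by blast
    have hc: "h \<in> carrier R" using hF Fc by blast
    have "\<one> \<in> sc h H" using incl[OF h] one by blast
    then obtain h' where h': "h' \<in> H" "\<one> = h \<otimes> h'" unfolding sc_def by blast
    have h'c: "h' \<in> carrier R" using h' HV Fc by blast
    have ihc: "inv h \<in> carrier R" "inv h \<otimes> h = \<one>" using subfield_m_inv(1,3)[OF F] hF h(2) Fc by auto
    have "inv h = inv h \<otimes> \<one>" using ihc(1) by simp
    also have "\<dots> = inv h \<otimes> (h \<otimes> h')" using h'(2) by simp
    also have "\<dots> = h'" using m_assoc[OF ihc(1) hc h'c] ihc(2) h'c by simp
    finally show ?thesis using h' by simp
  qed
  have mult: "h1 \<otimes> h2 \<in> H" if "h1 \<in> H" "h2 \<in> H" for h1 h2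
  proof (cases "h2 = \<zero>")
    case True thus ?thesis using that HV Fc isV_zero[OF HV(1)] by (auto simp: subsetD)
  next
    case False
    have h2F: "h2 \<in> F" using that HV by blast
    have i2: "inv h2 \<in> H" using inv[OF that(2) False] .
    have i2nz: "inv h2 \<noteq> \<zero>" using subfield_m_inv(1)[OF F] h2F False by blast
    have "h1 \<in> sc (inv h2) H" using incl[OF i2 i2nz] that(1) by blast
    then obtain h3 where h3: "h3 \<in> H" "h1 = inv h2 \<otimes> h3" unfolding sc_def by blast
    have cs: "h2 \<in> carrier R" "inv h2 \<in> carrier R" "h3 \<in> carrier R" "h1 \<in> carrier R"
      using h2F i2 h3 that HV Fc by auto
    have "h2 \<otimes> inv h2 = \<one>" using subfield_m_inv(2)[OF F] h2F False by blast
    hence "h2 \<otimes> h1 = h3" using h3(2) m_assoc[OF cs(1,2,3)] cs by simp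
    thus ?thesis using h3(1) m_comm[OF cs(4) cs(1)] by simp
  qed
  show ?thesis using H one mult inv by blast
qed

lemma kappa_main:
  "\<exists>kp. (\<forall>A. frag A \<longrightarrow> dm A + kp \<le> dm (prd A B)) \<and>
     (dm B \<le> 2 * kp \<or> (\<exists>H. isV H \<and> H \<subseteq> F \<and> H \<noteq> F \<and> B \<subseteq> H \<and> \<one> \<in> H \<and>
                          (\<forall>h1\<in>H. \<forall>h2\<in>H. h1 \<otimes> h2 \<in> H)))"
proof -
  obtain H where H: "frag H" "bd H = kap" "\<one> \<in> H" "\<forall>h1\<in>H. \<forall>h2\<in>H. h1 \<otimes> h2 \<in> H"
     "\<forall>h\<in>H. h \<noteq> \<zero> \<longrightarrow> inv h \<in> H"
    using atom_field by blast
  have HV: "isV H" "H \<subseteq> F" "prd H B \<noteq> F" using H(1) unfolding frag_def by auto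
  have Hc: "H \<subseteq> carrier R" using HV Fc by blast
  have all: "\<forall>A. frag A \<longrightarrow> dm A + kap \<le> dm (prd A B)"
    using kap_le frag_dm(1) by (metis add_le_cancel_left)
  have HP: "H \<subseteq> prd H B" using prd_contains[OF HV(1) Bc B(3)] .
  show ?thesis
  proof (cases "B \<subseteq> H")
    case True
    have "H \<noteq> F" using HP HV(3) prd_F[OF HV(2)] by blast
    thus ?thesis using all True HV H by blast
  next
    case False
    then obtain b where b: "b \<in> B" "b \<notin> H" by blast
    have bc: "b \<in> carrier R" "b \<in> F" using b Bc B(2) by auto
    have PV: "isV (prd H B)" using prd_V[OF HV(2)] .
    have BP: "B \<subseteq> prd H B" using prd_contains[OF B(1) Hc H(3)] prd_comm[OF Hc Bc] by simp
    have dB: "dm B \<le> dm (prd H B)" using dm_mono[OF B(1) PV BP] .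
    have sV: "isV (sc b H)" using sc_isV[OF HV(1) bc(1)] .
    have sP: "sc b H \<subseteq> prd H B"
    proof
      fix v assume "v \<in> sc b H"
      then obtain h where h: "h \<in> H" "v = b \<otimes> h" unfolding sc_def by blast
      have hc: "h \<in> carrier R" using h Hc by blast
      have "h \<otimes> b \<in> prd H B" using prd_mem[OF Hc Bc h(1) b(1)] .
      thus "v \<in> prd H B" using h(2) m_comm[OF hc bc(1)] by simp
    qed
    have int: "H \<inter> sc b H \<subseteq> {\<zero>}"
    proof
      fix v assume v: "v \<in> H \<inter> sc b H"
      then obtain h where h: "h \<in> H" "v = b \<otimes> h" unfolding sc_def by blast
      show "v \<in> {\<zero>}"
      proof (rule ccontr)
        assume "v \<notin> {\<zero>}"
        hence hnz: "h \<noteq> \<zero>" using h bc Hc by auto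
        have hc: "h \<in> carrier R" using h Hc by blast
        have ihH: "inv h \<in> H" using H(5) h(1) hnz by blast
        have ihc: "inv h \<in> carrier R" "h \<otimes> inv h = \<one>" using subfield_m_inv(1,2)[OF F] h(1) HV(2) hnz Fc by auto
        have "v \<otimes> inv h \<in> H" using H(4) v ihH by blast
        moreover have "v \<otimes> inv h = b" using h(2) m_assoc[OF bc(1) hc ihc(1)] ihc(2) bc by simp
        ultimately show False using b(2) by simp
      qed
    qed
    have int0: "H \<inter> sc b H = {\<zero>}" using int isV_zero[OF HV(1)] isV_zero[OF sV] by blast
    have dsc: "dm (sc b H) = dm H"
    proof -
      have "b \<noteq> \<zero>" using b(2) isV_zero[OF HV(1)] by blast
      thus ?thesis using sc_dim[OF HV(1) bc(1)] by simp
    qed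
    have "dm (H <+>\<^bsub>R\<^esub> sc b H) = 2 * dm H"
      using sum_dim[OF HV(1) sV] int0 dm_zero_iff[OF inter_isV[OF HV(1) sV]] dsc by simp
    moreover have "dm (H <+>\<^bsub>R\<^esub> sc b H) \<le> dm (prd H B)"
      using dm_mono[OF sum_isV[OF HV(1) sV] PV sum_min[OF PV HP sP]] .
    moreover have "dm H + kap = dm (prd H B)" using frag_dm(1)[OF H(1)] H(2) by simp
    ultimately have "dm B \<le> 2 * kap" using dB by linarith
    thus ?thesis using all by blast
  qed
qed

end


context fext
begin

declare Span.simps[simp del]

lemma prd_K_gen: assumes "isV B" shows "prd K B = B"
proof
  have Bc: "B \<subseteq> carrier R" using isV_carrier[OF assms] .
  show "prd K B \<subseteq> B" by (rule prd_min[OF assms]) (use isV_smult[OF assms] in blast)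
  have "B \<subseteq> prd B K" using prd_contains[OF assms Ksub Kone] .
  thus "B \<subseteq> prd K B" using prd_comm[OF Bc Ksub] by simp
qed

context
  fixes B assumes B: "isV B" "\<one> \<in> B"
begin

lemma Bc: "B \<subseteq> carrier R" using isV_carrier[OF B(1)] .

definition Sq where "Sq k = sp (prod_set B k)"

lemma ps_carrier: "prod_set B k \<subseteq> carrier R"
  by (induct k) (use Bc in auto)

lemma Sq_isV: "isV (Sq k)" unfolding Sq_def using sp_isV[OF ps_carrier] .

lemma Sq_c: "Sq k \<subseteq> carrier R" using isV_carrier[OF Sq_isV] .

lemma Sq_0: "Sq 0 = K"
proof
  show "Sq 0 \<subseteq> K" unfolding Sq_def by (rule sp_min[OF K_isV]) (simp add: Kone)
  show "K \<subseteq> Sq 0"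
  proof
    fix k assume k: "k \<in> K"
    have "\<one> \<in> Sq 0" unfolding Sq_def using sp_incl[OF ps_carrier, of 0] by simp
    hence "k \<otimes> \<one> \<in> Sq 0" using isV_smult[OF Sq_isV k] by blast
    thus "k \<in> Sq 0" using k Ksub by (simp add: subsetD)
  qed
qed

lemma Sq_Suc: "Sq (Suc k) = prd (Sq k) B"
proof
  show "Sq (Suc k) \<subseteq> prd (Sq k) B" unfolding Sq_def
  proof (rule sp_min[OF prd_isV[OF Sq_c[unfolded Sq_def] Bc]])
    show "prod_set B (Suc k) \<subseteq> prd (sp (prod_set B k)) B"
    proof
      fix v assume "v \<in> prod_set B (Suc k)"
      then obtain b c where bc: "b \<in> B" "c \<in> prod_set B k" "v = b \<otimes> c" by auto
      have cS: "c \<in> sp (prod_set B k)" using sp_incl[OF ps_carrier] bc(2) by blast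
      have "c \<otimes> b \<in> prd (sp (prod_set B k)) B" using prd_mem[OF Sq_c[unfolded Sq_def] Bc cS bc(1)] .
      moreover have "c \<otimes> b = v" using bc m_comm Bc ps_carrier by (metis subsetD)
      ultimately show "v \<in> prd (sp (prod_set B k)) B" by simp
    qed
  qed
  show "prd (Sq k) B \<subseteq> Sq (Suc k)"
  proof (rule prd_min[OF Sq_isV])
    fix x b assume x: "x \<in> Sq k" and b: "b \<in> B"
    have bc: "b \<in> carrier R" using b Bc by blast
    have "prod_set B k \<subseteq> {v \<in> carrier R. b \<otimes> v \<in> Sq (Suc k)}"
    proof
      fix c assume c: "c \<in> prod_set B k"
      have "b \<otimes> c \<in> prod_set B (Suc k)" using b c by auto
      hence "b \<otimes> c \<in> Sq (Suc k)" unfolding Sq_def using sp_incl[OF ps_carrier] by blast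
      thus "c \<in> {v \<in> carrier R. b \<otimes> v \<in> Sq (Suc k)}" using c ps_carrier by blast
    qed
    hence "Sq k \<subseteq> {v \<in> carrier R. b \<otimes> v \<in> Sq (Suc k)}"
      unfolding Sq_def[of k] by (rule sp_min[OF preim_isV[OF Sq_isV bc]])
    hence "b \<otimes> x \<in> Sq (Suc k)" using x by blast
    thus "x \<otimes> b \<in> Sq (Suc k)" using m_comm[OF _ bc] x Sq_c by (metis subsetD)
  qed
qed

lemma Sq_1: "Sq 1 = B" using Sq_Suc[of 0] Sq_0 prd_K_gen[OF B(1)] by simp

lemma Sq_step: "Sq k \<subseteq> Sq (Suc k)"
  using Sq_Suc prd_contains[OF Sq_isV Bc B(2)] by simp

lemma Sq_mono: "k \<le> j \<Longrightarrow> Sq k \<subseteq> Sq j"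
proof (induct j)
  case 0 thus ?case by simp
next
  case (Suc j)
  show ?case
  proof (cases "k = Suc j")
    case True thus ?thesis by simp
  next
    case False
    hence "k \<le> j" using Suc(2) by simp
    thus ?thesis using Suc(1) Sq_step[of j] by blast
  qed
qed

lemma Sq_stable: assumes "Sq (Suc k) = Sq k" shows "k \<le> j \<Longrightarrow> Sq j = Sq k"
proof (induct j)
  case 0 thus ?case by simp
next
  case (Suc j)
  show ?case
  proof (cases "k = Suc j")
    case True thus ?thesis by simp
  next
    case False
    hence "k \<le> j" using Suc(2) by simp
    hence "Sq j = Sq k" using Suc(1) by simp
    thus ?thesis using Sq_Suc assms by simp
  qed
qed

lemma K_Sq: "K \<subseteq> Sq k" using Sq_mono[of 0 k] Sq_0 by simp

lemma Sq_closed: assumes "Sq (Suc k) = Sq k" and x: "x \<in> Sq k"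
  shows "y \<in> Sq j \<Longrightarrow> x \<otimes> y \<in> Sq k"
proof (induct j arbitrary: y)
  case 0
  hence yK: "y \<in> K" using Sq_0 by simp
  have "y \<otimes> x \<in> Sq k" using isV_smult[OF Sq_isV yK x] .
  thus ?case using m_comm Ksub Sq_c yK x by (metis subsetD)
next
  case (Suc j)
  have xc: "x \<in> carrier R" using x Sq_c by blast
  have "prd (Sq j) B \<subseteq> {v \<in> carrier R. x \<otimes> v \<in> Sq k}"
  proof (rule prd_min[OF preim_isV[OF Sq_isV xc]])
    fix s b assume s: "s \<in> Sq j" and b: "b \<in> B"
    have sc: "s \<in> carrier R" "b \<in> carrier R" using s b Sq_c Bc by auto
    have "x \<otimes> s \<in> Sq k" using Suc(1)[OF s] .
    hence "(x \<otimes> s) \<otimes> b \<in> prd (Sq k) B" using prd_mem[OF Sq_c Bc _ b] by blast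
    hence "(x \<otimes> s) \<otimes> b \<in> Sq k" using Sq_Suc[of k] assms(1) by simp
    thus "s \<otimes> b \<in> {v \<in> carrier R. x \<otimes> v \<in> Sq k}" using m_assoc[OF xc sc] sc by simp
  qed
  thus ?case using Suc(2) Sq_Suc by blast
qed

lemma Sq_field: assumes "Sq (Suc k) = Sq k" shows "subfield (Sq k) R"
proof (rule subfieldI')
  show sr: "subring (Sq k) R"
  proof (rule subringI)
    show "Sq k \<subseteq> carrier R" using Sq_c .
    show "\<one> \<in> Sq k" using K_Sq Kone by blast
    show "\<And>h. h \<in> Sq k \<Longrightarrow> \<ominus> h \<in> Sq k" using isV_neg[OF Sq_isV] .
    show "\<And>h1 h2. h1 \<in> Sq k \<Longrightarrow> h2 \<in> Sq k \<Longrightarrow> h1 \<otimes> h2 \<in> Sq k" using Sq_closed[OF assms] by blast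
    show "\<And>h1 h2. h1 \<in> Sq k \<Longrightarrow> h2 \<in> Sq k \<Longrightarrow> h1 \<oplus> h2 \<in> Sq k" using isV_add[OF Sq_isV] .
  qed
  fix x assume x: "x \<in> Sq k - {\<zero>}"
  have xc: "x \<in> carrier R" "x \<noteq> \<zero>" using x Sq_c by auto
  have sub: "sc x (Sq k) \<subseteq> Sq k" unfolding sc_def using Sq_closed[OF assms] x by blast
  have "sc x (Sq k) = Sq k"
    using dm_eq[OF sc_isV[OF Sq_isV xc(1)] Sq_isV sub] sc_dim[OF Sq_isV xc] by simp
  hence "\<one> \<in> sc x (Sq k)" using K_Sq Kone by blast
  then obtain y where y: "y \<in> Sq k" "\<one> = x \<otimes> y" unfolding sc_def by blast
  have yc: "y \<in> carrier R" using y Sq_c by blast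
  have "inv x = y" using y(2) xc yc by (metis comm_inv_char)
  thus "inv x \<in> Sq k" using y by simp
qed

lemma Sq_ex: "\<exists>k\<ge>1. Sq (Suc k) = Sq k"
proof (rule ccontr)
  assume "\<not> ?thesis"
  hence ne: "\<And>k. k \<ge> 1 \<Longrightarrow> Sq (Suc k) \<noteq> Sq k" by blast
  have "Suc k \<le> dm (Sq (Suc k))" for k
  proof (induct k)
    case 0
    have "B \<noteq> {\<zero>}" using B(2) one_not_zero by blast
    thus ?case using Sq_1 dm_zero_iff[OF B(1)] by simp
  next
    case (Suc k)
    have "dm (Sq (Suc k)) < dm (Sq (Suc (Suc k)))"
      using dm_mono[OF Sq_isV Sq_isV Sq_step] dm_eq[OF Sq_isV Sq_isV Sq_step] ne[of "Suc k"]
      by (metis le_add1 not_less plus_1_eq_Suc)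
    thus ?case using Suc by simp
  qed
  from this[of "dm (carrier R)"] have "Suc (dm (carrier R)) \<le> dm (carrier R)"
    using dm_le_total[OF Sq_isV, of "Suc (dm (carrier R))"] by linarith
  thus False by simp
qed

lemma field_stable: assumes "subfield (Sq n) R" "1 \<le> n" shows "Sq (Suc n) = Sq n"
proof
  have BS: "B \<subseteq> Sq n" using Sq_mono[OF assms(2)] Sq_1 by simp
  show "Sq (Suc n) \<subseteq> Sq n" unfolding Sq_Suc
    by (rule prd_min[OF Sq_isV]) (use subringE(6)[OF subfieldE(1)[OF assms(1)]] BS in blast)
  show "Sq n \<subseteq> Sq (Suc n)" using Sq_step .
qed

lemma arith3: assumes a: "(m::nat) \<le> 2 * kp" "2 \<le> n" "m + (n - 2) * kp \<le> d" shows "n * m \<le> 2 * d"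
proof -
  obtain t where t: "n = t + 2" using a(2) le_Suc_ex by (metis add.commute)
  have "t * m \<le> t * (2 * kp)" using a(1) by simp
  hence "n * m \<le> 2 * (m + t * kp)" unfolding t by (simp add: algebra_simps)
  also have "\<dots> \<le> 2 * d" using a(3) t by simp
  finally show ?thesis .
qed

theorem main_seq:
  shows "(\<exists>n\<ge>1. subfield (Sq n) R)
    \<and> real (LEAST n. n \<ge> 1 \<and> subfield (Sq n) R) \<le> 2 * real (dm (carrier R)) / real (dm B)"
proof -
  obtain k where k: "k \<ge> 1" "Sq (Suc k) = Sq k" using Sq_ex by blast
  have ex: "\<exists>n\<ge>1. subfield (Sq n) R" using k Sq_field by blast
  define n where "n = (LEAST n. n \<ge> 1 \<and> subfield (Sq n) R)"
  have n: "n \<ge> 1" "subfield (Sq n) R" using LeastI_ex[of "\<lambda>n. n \<ge> 1 \<and> subfield (Sq n) R"] ex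
    unfolding n_def by auto
  have nmin: "\<And>j. 1 \<le> j \<Longrightarrow> j < n \<Longrightarrow> \<not> subfield (Sq j) R"
    unfolding n_def using not_less_Least by blast
  have Bnz: "B \<noteq> {\<zero>}" using B(2) one_not_zero by blast
  have m0: "0 < dm B" using dm_zero_iff[OF B(1)] Bnz by simp
  have mD: "dm B \<le> dm (carrier R)" using dm_le_total[OF B(1)] .
  have "n * dm B \<le> 2 * dm (carrier R)"
  proof (cases "n = 1")
    case True thus ?thesis using mD by simp
  next
    case False
    hence n2: "2 \<le> n" using n(1) by simp
    define F where "F = Sq n"
    have FF: "subfield F R" "K \<subseteq> F" using n(2) K_Sq unfolding F_def by auto
    obtain W where W: "isV W" "W \<subseteq> F" "\<one> \<notin> W" "Suc (dm W) = dm F"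
      using hyp_exists[OF FF] by blast
    have BF: "B \<subseteq> F" using Sq_mono[OF n(1)] Sq_1 unfolding F_def by simp
    have BneF: "B \<noteq> F" using nmin[of 1] n2 Sq_1 n(2) unfolding F_def by auto
    have "amb2 R K F W B"
      by (rule amb2.intro[OF amb.intro[OF fext_axioms amb_axioms.intro[OF FF W]]
                             amb2_axioms.intro[OF B(1) BF B(2) BneF]])
    then interpret a2: amb2 R K F W B .
    obtain kp where kp: "\<forall>A. a2.frag A \<longrightarrow> dm A + kp \<le> dm (prd A B)"
      "dm B \<le> 2 * kp \<or> (\<exists>H. isV H \<and> H \<subseteq> F \<and> H \<noteq> F \<and> B \<subseteq> H \<and> \<one> \<in> H \<and>
                          (\<forall>h1\<in>H. \<forall>h2\<in>H. h1 \<otimes> h2 \<in> H))"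
      using a2.kappa_main by blast
    have mk: "dm B \<le> 2 * kp"
    proof (rule ccontr)
      assume "\<not> dm B \<le> 2 * kp"
      then obtain H where H: "isV H" "H \<subseteq> F" "H \<noteq> F" "B \<subseteq> H" "\<one> \<in> H"
          "\<forall>h1\<in>H. \<forall>h2\<in>H. h1 \<otimes> h2 \<in> H" using kp(2) by blast
      have "Sq j \<subseteq> H" for j
      proof (induct j)
        case 0
        show ?case unfolding Sq_0 using isV_smult[OF H(1) _ H(5)] Ksub by (metis r_one subsetD subsetI)
      next
        case (Suc j)
        show ?case unfolding Sq_Suc by (rule prd_min[OF H(1)]) (use Suc H(4,6) in blast)
      qed
      hence "F \<subseteq> H" unfolding F_def by blast
      thus False using H(2,3) by blast
    qed
    have step: "dm (Sq j) + kp \<le> dm (Sq (Suc j))" if "1 \<le> j" "Suc j < n" for j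
    proof -
      have "Sq (Suc j) \<noteq> F" using nmin[of "Suc j"] that n(2) unfolding F_def by auto
      moreover have "K \<subseteq> Sq j" using K_Sq .
      hence "Sq j \<noteq> {\<zero>}" using Kone one_not_zero by blast
      moreover have "Sq j \<subseteq> F" using Sq_mono[of j n] that unfolding F_def by simp
      ultimately have "a2.frag (Sq j)" unfolding a2.frag_def using Sq_isV Sq_Suc by simp
      thus ?thesis using kp(1) Sq_Suc by simp
    qed
    have grow: "dm B + (j - 1) * kp \<le> dm (Sq j)" if "1 \<le> j" "j < n" for j
      using that
    proof (induct j)
      case 0 thus ?case by simp
    next
      case (Suc j)
      show ?case
      proof (cases "j = 0")
        case True thus ?thesis using Sq_1 by simp
      next
        case False
        hence "dm B + (j - 1) * kp \<le> dm (Sq j)" using Suc by simp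
        moreover have "dm (Sq j) + kp \<le> dm (Sq (Suc j))" using step[of j] False Suc(3) by simp
        moreover have "(Suc j - 1) * kp = (j - 1) * kp + kp" using False by (cases j) auto
        ultimately show ?thesis by simp
      qed
    qed
    have i1: "1 \<le> n - 1" "n - 1 < n" using n2 by auto
    have e2: "n - 1 - 1 = n - 2" by simp
    have g: "dm B + (n - 2) * kp \<le> dm (Sq (n - 1))" using grow[OF i1] unfolding e2 .
    have "Sq (n - 1) \<subseteq> F" using Sq_mono[of "n - 1" n] unfolding F_def by simp
    moreover have "Sq (n - 1) \<noteq> F" using nmin[OF i1] n(2) unfolding F_def by auto
    ultimately have "dm (Sq (n - 1)) < dm F"
      using dm_mono[OF Sq_isV a2.FV] dm_eq[OF Sq_isV a2.FV] by fastforce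
    moreover have "dm F \<le> dm (carrier R)" using dm_le_total[OF a2.FV] .
    moreover have "n * dm B \<le> 2 * dm (Sq (n - 1))" using arith3[OF mk n2 g] .
    ultimately show ?thesis by linarith
  qed
  hence "real n * real (dm B) \<le> 2 * real (dm (carrier R))" by (metis of_nat_le_iff of_nat_mult of_nat_numeral)
  hence "real n \<le> 2 * real (dm (carrier R)) / real (dm B)" using m0 by (simp add: pos_le_divide_eq)
  thus ?thesis using ex unfolding n_def by simp
qed

end
end

theorem mainTheorem15:
  fixes L (structure) and K B :: "'a set"
  assumes "field L"
    and "subfield K L"
    and "ring.finite_dimension L K (carrier L)"
    and "ring.separable_ext L K"
    and "subalgebra K B L"
    and "\<one>\<^bsub>L\<^esub> \<in> B"
  shows "(\<exists>n\<ge>1. subfield (ring.span_set L K (ring.prod_set L B n)) L)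
    \<and> real (LEAST n. n \<ge> 1 \<and> subfield (ring.span_set L K (ring.prod_set L B n)) L)
        \<le> 2 * real (ring.dim L K (carrier L)) / real (ring.dim L K B)"
proof -
  interpret f: fext L K
    by (rule fext.intro[OF assms(1) fext_axioms.intro[OF assms(2,3)]])
  show ?thesis using f.main_seq[OF assms(5,6)] unfolding f.Sq_def[OF assms(5,6)] .
qed

end
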